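(* Consider the SemiFree Magnetic Tower of Hanoi with $N\ge1$ disks: posts $S$, $D$, $I$, where every disk lying on $S$ must have its Red face up, every disk lying on $D$ must have its Blue face up, and $I$ is initially empty and unconstrained; the $N$ disks start on $S$ (Red face up, decreasing size bottom to top) and must be transferred to $D$. This can be done in $S_{SF}(N)$ moves, where $$S_{SF}(N)=(3^{N-1}+N-1)+\frac{3^{N-1}-1}{8}-\frac{N-1}{2}\quad (N\text{ odd}),\qquad S_{SF}(N)=(3^{N-1}+N-1)+\frac{3^{N-1}-3}{8}-\frac{N-2}{2}\quad (N\text{ even}),$$ by a solution in which disk $k$ (disks numbered $1,\dots,N$ from largest to smallest) moves $$P_{SF}(k)=2\cdot3^{k-2}+\frac{3^{k-1}-9}{8}-\frac{3^{k-2}-3}{8}+1\ (k\text{ odd}),\qquad P_{SF}(k)=2\cdot3^{k-2}+\frac{3^{k-1}-3}{8}-\frac{3^{k-2}-9}{8}\ (k\text{ even})$$ times. Moreover $S_{SF}(N)\big/\tfrac{3^N-1}{2}\to\tfrac34$ as $N\to\infty$.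
   Context: Magnetic Tower of Hanoi rules: there are three posts and disks of distinct diameters, each disk having one Red face and one Blue face. A move consists of lifting the top disk of some post, turning it upside down, and placing it on top of another post. (Size rule) a disk may never be placed on a smaller disk; (Magnet rule) a disk may never be placed so that its downward-facing side has the same color as the upward-facing side of the disk it lands on. In the SemiFree setting the posts $S$ and $D$ are permanently and oppositely colored (as if they sit on top of larger disks showing Red and Blue respectively), so any disk on $S$ must show Red upward and any disk on $D$ must show Blue upward, while the third post $I$ starts empty and neutral and may hold disks in either orientation subject to the rules above. *)

theory Defs
  imports Complex_Main
begin

text \<open>Disks are numbered 1..N from largest to smallest, so disk k is smaller than
  disk k' iff k' < k.  A disk on a post is recorded with the colour of its
  upward-facing side; each post holds a list of disks, top disk first.\<close>

datatype color = Red | Blue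

fun flip :: "color \<Rightarrow> color" where
  "flip Red = Blue" | "flip Blue = Red"

datatype post = S | D | I

type_synonym state = "post \<Rightarrow> (nat \<times> color) list"

text \<open>Colour shown upward by the (virtual) base of an empty post:
  S behaves as if sitting on a disk showing Red, D on one showing Blue,
  I is neutral.\<close>
fun base_color :: "post \<Rightarrow> color option" where
  "base_color S = Some Red" | "base_color D = Some Blue" | "base_color I = None"

definition legal_move :: "state \<Rightarrow> post \<times> post \<Rightarrow> bool" where
  "legal_move st m = (case m of (p, q) \<Rightarrow>
     p \<noteq> q \<and> st p \<noteq> [] \<and>
     (case hd (st p) of (k, c) \<Rightarrow>
        \<comment> \<open>after flipping, the downward face of the moved disk shows c\<close>
        (case st q of
           [] \<Rightarrow> base_color q \<noteq> Some c
         | (k', c') # _ \<Rightarrow> k' < k \<and> c' \<noteq> c)))"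

definition do_move :: "state \<Rightarrow> post \<times> post \<Rightarrow> state" where
  "do_move st m = (case m of (p, q) \<Rightarrow>
     st(p := tl (st p), q := (case hd (st p) of (k, c) \<Rightarrow> (k, flip c)) # st q))"

fun valid_run :: "state \<Rightarrow> (post \<times> post) list \<Rightarrow> state \<Rightarrow> bool" where
  "valid_run st [] st' = (st' = st)"
| "valid_run st (m # ms) st' = (legal_move st m \<and> valid_run (do_move st m) ms st')"

fun disk_moves :: "state \<Rightarrow> (post \<times> post) list \<Rightarrow> nat \<Rightarrow> nat" where
  "disk_moves st [] k = 0"
| "disk_moves st (m # ms) k =
     (if fst (hd (st (fst m))) = k then 1 else 0) + disk_moves (do_move st m) ms k"

definition init_state :: "nat \<Rightarrow> state" where
  "init_state N = (\<lambda>p. if p = S then map (\<lambda>k. (k, Red)) (rev [1..<N+1]) else [])"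

definition final_state :: "nat \<Rightarrow> state" where
  "final_state N = (\<lambda>p. if p = D then map (\<lambda>k. (k, Blue)) (rev [1..<N+1]) else [])"

definition S_SF :: "nat \<Rightarrow> real" where
  "S_SF N = (if odd N
     then (3 ^ (N - 1) + real N - 1) + (3 ^ (N - 1) - 1) / 8 - (real N - 1) / 2
     else (3 ^ (N - 1) + real N - 1) + (3 ^ (N - 1) - 3) / 8 - (real N - 2) / 2)"

definition P_SF :: "nat \<Rightarrow> real" where
  "P_SF k = (if odd k
     then 2 * 3 powi (int k - 2) + (3 powi (int k - 1) - 9) / 8 - (3 powi (int k - 2) - 3) / 8 + 1
     else 2 * 3 powi (int k - 2) + (3 powi (int k - 1) - 3) / 8 - (3 powi (int k - 2) - 9) / 8)"

end

theory Submission
  imports Defs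
begin


definition tower :: "nat \<Rightarrow> nat \<Rightarrow> color \<Rightarrow> (nat \<times> color) list" where
  "tower k n c = map (\<lambda>i. (i, c)) (rev [k..<k+n])"

lemma tower_0[simp]: "tower k 0 c = []" by (simp add: tower_def)
lemma tower_Suc: "tower k (Suc n) c = tower (Suc k) n c @ [(k,c)]"
  by (simp add: tower_def upt_rec)
lemma set_tower: "a \<in> set (tower k n c) \<Longrightarrow> k \<le> fst a"
  by (auto simp: tower_def)

lemma flip_flip[simp]: "flip (flip c) = c" by (cases c) auto
lemma flip_neq[simp]: "flip c \<noteq> c" "c \<noteq> flip c" by (cases c; auto)+

fun tc :: "post \<Rightarrow> (nat \<times> color) list \<Rightarrow> color option" where
  "tc q [] = base_color q" | "tc q ((j,c)#_) = Some c"

definition runs where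
  "runs st ms st' f \<longleftrightarrow> valid_run st ms st' \<and> (\<forall>i. disk_moves st ms i = f i)"

lemma valid_run_append: "valid_run st xs st1 \<Longrightarrow> valid_run st (xs @ ys) st2 = valid_run st1 ys st2"
  by (induction xs arbitrary: st) auto

lemma disk_moves_append: "valid_run st xs st1 \<Longrightarrow> disk_moves st (xs @ ys) i = disk_moves st xs i + disk_moves st1 ys i"
  by (induction xs arbitrary: st) auto

lemma runs_append: "runs st xs st1 f \<Longrightarrow> runs st1 ys st2 g \<Longrightarrow> runs st (xs@ys) st2 (\<lambda>i. f i + g i)"
  unfolding runs_def using valid_run_append disk_moves_append by metis

lemma runs_Nil: "runs st [] st (\<lambda>i. 0)" by (simp add: runs_def)

lemma runs_cong: "runs st ms st' f \<Longrightarrow> (\<And>i. f i = g i) \<Longrightarrow> runs st ms st' g"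
  by (simp add: runs_def)

lemma runs_eq: "runs st ms st' f \<Longrightarrow> st = st0 \<Longrightarrow> st' = st1 \<Longrightarrow> runs st0 ms st1 f"
  by simp

lemma move_step:
  assumes "p \<noteq> q" "st p = (j, cc) # xs" "\<forall>a\<in>set (st q). fst a < j" "tc q (st q) \<noteq> Some cc"
  shows "runs st [(p,q)] (st(p := xs, q := (j, flip cc) # st q)) (\<lambda>i. if i = j then 1 else 0)"
proof -
  have "legal_move st (p,q)" using assms
    by (cases "st q") (auto simp: legal_move_def split: prod.splits)
  moreover have "do_move st (p,q) = st(p := xs, q := (j, flip cc) # st q)"
    using assms by (simp add: do_move_def)
  ultimately show ?thesis using assms by (auto simp: runs_def)
qed

fun other :: "post \<Rightarrow> post \<Rightarrow> post" where
  "other S D = I" | "other D S = I" | "other S I = D" | "other I S = D"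
| "other D I = S" | "other I D = S" | "other _ _ = S"

lemma other_neq: "x \<noteq> y \<Longrightarrow> other x y \<noteq> x \<and> other x y \<noteq> y"
  by (cases x; cases y; auto)
lemma other_cases: "x \<noteq> y \<Longrightarrow> p = x \<or> p = y \<or> p = other x y"
  by (cases x; cases y; cases p; auto)




fun lin :: "nat \<Rightarrow> post \<Rightarrow> post \<Rightarrow> post \<Rightarrow> (post \<times> post) list" where
  "lin 0 c x y = []"
| "lin (Suc n) c x y = (if x = c \<or> y = c
     then lin n c x (other x y) @ [(x,y)] @ lin n c (other x y) y
     else lin n c x y @ [(x,c)] @ lin n c y x @ [(c,y)] @ lin n c x y)"

definition cl :: "post \<Rightarrow> color \<Rightarrow> post \<Rightarrow> color" where
  "cl c g p = (if p = c then g else flip g)"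

definition lc :: "post \<Rightarrow> post \<Rightarrow> post \<Rightarrow> nat \<Rightarrow> nat" where
  "lc c x y j = (if x = c \<or> y = c then 3^j else 2*3^j)"

lemma idx_upd: "\<forall>p. \<forall>a\<in>set (B p). fst a < k \<Longrightarrow> \<forall>p. \<forall>a\<in>set ((B(x := (k,c)#B x)) p). fst a < Suc k"
  by (auto simp: less_SucI)
lemma col_upd: "\<forall>p. tc p (B p) \<noteq> Some (F p) \<Longrightarrow> F x \<noteq> c \<Longrightarrow> \<forall>p. tc p ((B(x := (k,c)#B x)) p) \<noteq> Some (F p)"
  by auto

lemma lin_runs:
  "x \<noteq> y \<Longrightarrow> (\<forall>p. \<forall>a\<in>set (B p). fst a < k) \<Longrightarrow> (\<forall>p. tc p (B p) \<noteq> Some (flip (cl c g p))) \<Longrightarrow>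
   runs (B(x := tower k n (cl c g x) @ B x)) (lin n c x y) (B(y := tower k n (cl c g y) @ B y))
     (\<lambda>i. if k \<le> i \<and> i < k+n then lc c x y (i-k) else 0)"
proof (induction n arbitrary: B k x y)
  case 0
  then show ?case by (auto intro!: runs_cong[OF runs_Nil])
next
  case (Suc n)
  note xy = Suc.prems(1) and idx = Suc.prems(2) and col = Suc.prems(3)
  define w where "w = other x y"
  have ox: "w \<noteq> x" "w \<noteq> y" using other_neq[OF xy] by (auto simp: w_def)
  have three: "\<And>p. p = x \<or> p = y \<or> p = w" using other_cases[OF xy] by (auto simp: w_def)
  have ext3: "\<And>f h :: post \<Rightarrow> (nat \<times> color) list. f x = h x \<Longrightarrow> f y = h y \<Longrightarrow> f w = h w \<Longrightarrow> f = h"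
    proof (rule ext) fix f h :: "post \<Rightarrow> (nat \<times> color) list" and p assume "f x = h x" "f y = h y" "f w = h w" then show "f p = h p" using three[of p] by auto qed
  show ?case
  proof (cases "x = c \<or> y = c")
    case True
    have fl: "flip (cl c g x) = cl c g y" using True xy by (auto simp: cl_def)
    define B1 where "B1 = B(x := (k, cl c g x) # B x)"
    have r1: "runs (B1(x := tower (Suc k) n (cl c g x) @ B1 x)) (lin n c x w) (B1(w := tower (Suc k) n (cl c g w) @ B1 w))
       (\<lambda>i. if Suc k \<le> i \<and> i < Suc k+n then lc c x w (i-Suc k) else 0)"
      unfolding B1_def by (rule Suc.IH[OF _ idx_upd[OF idx] col_upd[OF col]]) (use ox xy in \<open>auto simp: cl_def\<close>)
    define st1 where "st1 = B1(w := tower (Suc k) n (cl c g w) @ B1 w)"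
    have r2: "runs st1 [(x,y)] (st1(x := B x, y := (k, flip (cl c g x)) # st1 y)) (\<lambda>i. if i = k then 1 else 0)"
      apply (rule move_step)
      using xy ox idx col[rule_format, of y] fl[symmetric] by (auto simp: st1_def B1_def)
    define B2 where "B2 = B(y := (k, cl c g y) # B y)"
    have r3: "runs (B2(w := tower (Suc k) n (cl c g w) @ B2 w)) (lin n c w y) (B2(y := tower (Suc k) n (cl c g y) @ B2 y))
       (\<lambda>i. if Suc k \<le> i \<and> i < Suc k+n then lc c w y (i-Suc k) else 0)"
      unfolding B2_def by (rule Suc.IH[OF _ idx_upd[OF idx] col_upd[OF col]]) (use ox xy in \<open>auto simp: cl_def\<close>)
    have e1: "B(x := tower k (Suc n) (cl c g x) @ B x) = B1(x := tower (Suc k) n (cl c g x) @ B1 x)"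
      by (simp add: B1_def tower_Suc)
    have e2: "st1(x := B x, y := (k, flip (cl c g x)) # st1 y) = B2(w := tower (Suc k) n (cl c g w) @ B2 w)"
      by (rule ext3) (use ox xy fl in \<open>auto simp: st1_def B1_def B2_def\<close>)
    have e3: "B2(y := tower (Suc k) n (cl c g y) @ B2 y) = B(y := tower k (Suc n) (cl c g y) @ B y)"
      by (simp add: B2_def tower_Suc)
    have "lin (Suc n) c x y = lin n c x w @ [(x,y)] @ lin n c w y" using True by (simp add: w_def)
    moreover have "runs (B(x := tower k (Suc n) (cl c g x) @ B x)) (lin n c x w @ [(x,y)] @ lin n c w y)
       (B(y := tower k (Suc n) (cl c g y) @ B y)) (\<lambda>i. if k \<le> i \<and> i < k + Suc n then lc c x y (i - k) else 0)"
    proof (rule runs_cong)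
      show "runs (B(x := tower k (Suc n) (cl c g x) @ B x)) (lin n c x w @ [(x,y)] @ lin n c w y)
       (B(y := tower k (Suc n) (cl c g y) @ B y)) 
       (\<lambda>i. (if Suc k \<le> i \<and> i < Suc k+n then lc c x w (i-Suc k) else 0) + ((if i = k then 1 else 0) + (if Suc k \<le> i \<and> i < Suc k+n then lc c w y (i-Suc k) else 0)))"
        unfolding e1 e3[symmetric]
        by (rule runs_append[OF r1[folded st1_def]], rule runs_append[OF r2, unfolded e2], rule r3)
    next
      fix i
      show "(if Suc k \<le> i \<and> i < Suc k+n then lc c x w (i-Suc k) else 0) + ((if i = k then 1 else 0) + (if Suc k \<le> i \<and> i < Suc k+n then lc c w y (i-Suc k) else 0))
        = (if k \<le> i \<and> i < k + Suc n then lc c x y (i - k) else 0)"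
      proof (cases "i \<le> k")
        case True then show ?thesis using \<open>x = c \<or> y = c\<close> by (auto simp: lc_def)
      next
        case False
        then obtain j where j: "i = Suc k + j" by (metis add_Suc_right add_Suc_shift less_imp_Suc_add not_le)
        show ?thesis using \<open>x = c \<or> y = c\<close> ox xy unfolding j by (auto simp: lc_def)
      qed
    qed
    ultimately show ?thesis by (simp only:)
  next
    case False
    then have oc: "w = c" using three[of c] by blast
    have clx: "cl c g x = flip g" "cl c g y = flip g" "cl c g c = g" using False by (auto simp: cl_def)
    define B1 where "B1 = B(x := (k, cl c g x) # B x)"
    have r1: "runs (B1(x := tower (Suc k) n (cl c g x) @ B1 x)) (lin n c x y) (B1(y := tower (Suc k) n (cl c g y) @ B1 y))
       (\<lambda>i. if Suc k \<le> i \<and> i < Suc k+n then lc c x y (i-Suc k) else 0)"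
      unfolding B1_def by (rule Suc.IH[OF _ idx_upd[OF idx] col_upd[OF col]]) (use ox xy in \<open>auto simp: cl_def\<close>)
    define st1 where "st1 = B1(y := tower (Suc k) n (cl c g y) @ B1 y)"
    have r2: "runs st1 [(x,c)] (st1(x := B x, c := (k, flip (cl c g x)) # st1 c)) (\<lambda>i. if i = k then 1 else 0)"
      apply (rule move_step)
      using xy ox oc idx col[rule_format, of c] clx by (auto simp: st1_def B1_def)
    define B2 where "B2 = B(c := (k, cl c g c) # B c)"
    have r3: "runs (B2(y := tower (Suc k) n (cl c g y) @ B2 y)) (lin n c y x) (B2(x := tower (Suc k) n (cl c g x) @ B2 x))
       (\<lambda>i. if Suc k \<le> i \<and> i < Suc k+n then lc c y x (i-Suc k) else 0)"
      unfolding B2_def by (rule Suc.IH[OF _ idx_upd[OF idx] col_upd[OF col]]) (use ox xy in \<open>auto simp: cl_def\<close>)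
    define st3 where "st3 = B2(x := tower (Suc k) n (cl c g x) @ B2 x)"
    have r4: "runs st3 [(c,y)] (st3(c := B c, y := (k, flip (cl c g c)) # st3 y)) (\<lambda>i. if i = k then 1 else 0)"
      apply (rule move_step)
      using xy ox oc idx col[rule_format, of y] clx by (auto simp: st3_def B2_def)
    define B3 where "B3 = B(y := (k, cl c g y) # B y)"
    have r5: "runs (B3(x := tower (Suc k) n (cl c g x) @ B3 x)) (lin n c x y) (B3(y := tower (Suc k) n (cl c g y) @ B3 y))
       (\<lambda>i. if Suc k \<le> i \<and> i < Suc k+n then lc c x y (i-Suc k) else 0)"
      unfolding B3_def by (rule Suc.IH[OF _ idx_upd[OF idx] col_upd[OF col]]) (use ox xy in \<open>auto simp: cl_def\<close>)
    have e1: "B(x := tower k (Suc n) (cl c g x) @ B x) = B1(x := tower (Suc k) n (cl c g x) @ B1 x)"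
      by (simp add: B1_def tower_Suc)
    have e2: "st1(x := B x, c := (k, flip (cl c g x)) # st1 c) = B2(y := tower (Suc k) n (cl c g y) @ B2 y)"
      by (rule ext3) (use ox oc xy clx in \<open>auto simp: st1_def B1_def B2_def\<close>)
    have e3: "st3(c := B c, y := (k, flip (cl c g c)) # st3 y) = B3(x := tower (Suc k) n (cl c g x) @ B3 x)"
      by (rule ext3) (use ox oc xy clx in \<open>auto simp: st3_def B3_def B2_def\<close>)
    have e4: "B3(y := tower (Suc k) n (cl c g y) @ B3 y) = B(y := tower k (Suc n) (cl c g y) @ B y)"
      by (simp add: B3_def tower_Suc)
    have "lin (Suc n) c x y = lin n c x y @ [(x,c)] @ lin n c y x @ [(c,y)] @ lin n c x y" using False by simp
    moreover have "runs (B(x := tower k (Suc n) (cl c g x) @ B x)) (lin n c x y @ [(x,c)] @ lin n c y x @ [(c,y)] @ lin n c x y)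
       (B(y := tower k (Suc n) (cl c g y) @ B y)) (\<lambda>i. if k \<le> i \<and> i < k + Suc n then lc c x y (i - k) else 0)"
    proof (rule runs_cong)
      show "runs (B(x := tower k (Suc n) (cl c g x) @ B x)) (lin n c x y @ [(x,c)] @ lin n c y x @ [(c,y)] @ lin n c x y)
       (B(y := tower k (Suc n) (cl c g y) @ B y)) 
       (\<lambda>i. (if Suc k \<le> i \<and> i < Suc k+n then lc c x y (i-Suc k) else 0) + ((if i = k then 1 else 0) + 
          ((if Suc k \<le> i \<and> i < Suc k+n then lc c y x (i-Suc k) else 0) + ((if i = k then 1 else 0) +
           (if Suc k \<le> i \<and> i < Suc k+n then lc c x y (i-Suc k) else 0)))))"
        unfolding e1 e4[symmetric]
        by (rule runs_append[OF r1[folded st1_def]], rule runs_append[OF r2, unfolded e2],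
            rule runs_append[OF r3[folded st3_def]], rule runs_append[OF r4, unfolded e3], rule r5)
    next
      fix i
      show "(if Suc k \<le> i \<and> i < Suc k+n then lc c x y (i-Suc k) else 0) + ((if i = k then 1 else 0) + 
          ((if Suc k \<le> i \<and> i < Suc k+n then lc c y x (i-Suc k) else 0) + ((if i = k then 1 else 0) +
           (if Suc k \<le> i \<and> i < Suc k+n then lc c x y (i-Suc k) else 0))))
        = (if k \<le> i \<and> i < k + Suc n then lc c x y (i - k) else 0)"
      proof (cases "i \<le> k")
        case True then show ?thesis using False by (auto simp: lc_def)
      next
        case False': False
        then obtain j where j: "i = Suc k + j" by (metis add_Suc_right add_Suc_shift less_imp_Suc_add not_le)
        show ?thesis using False unfolding j by (auto simp: lc_def)
      qed
    qed
    ultimately show ?thesis by (simp only:)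
  qed
qed




lemma all_post: "(\<forall>p. P p) \<longleftrightarrow> P S \<and> P D \<and> P I"
  apply auto apply (case_tac p) apply auto done
lemma fun_post_eq: "(f = h) \<longleftrightarrow> f S = h S \<and> f D = h D \<and> f I = h I" for f h :: "post \<Rightarrow> 'a"
  apply auto apply (rule ext) apply (case_tac x) apply auto done

lemma runs_seq: "runs st xs st1 f \<Longrightarrow> runs st1' ys st2 g \<Longrightarrow> st1 = st1' \<Longrightarrow> runs st (xs@ys) st2 (\<lambda>i. f i + g i)"
  using runs_append by blast

lemma runs_eq': "runs st ms st' f \<Longrightarrow> st = st0 \<Longrightarrow> st' = st1 \<Longrightarrow> (\<And>i. f i = g i) \<Longrightarrow> runs st0 ms st1 g"
  by (simp add: runs_def)

lemma move_step':
  assumes "p \<noteq> q" "st p = (j, cc) # xs" "\<forall>a\<in>set (st q). fst a < j" "tc q (st q) \<noteq> Some cc"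
    "st' = st(p := xs, q := (j, flip cc) # st q)"
  shows "runs st [(p,q)] st' (\<lambda>i. if i = j then 1 else 0)"
  using move_step[OF assms(1-4)] assms(5) by simp

lemma runs_eqm: "runs st ms st' f \<Longrightarrow> st = st0 \<Longrightarrow> ms = ms0 \<Longrightarrow> st' = st1 \<Longrightarrow> (\<And>i. f i = g i) \<Longrightarrow> runs st0 ms0 st1 g"
  by (simp add: runs_def)

fun xr :: "nat \<Rightarrow> (post \<times> post) list" where
  "xr 0 = []"
| "xr (Suc m) = lin m S S I @ [(S,D)] @ lin m S I S @ [(D,I)] @ lin m D S I"

definition xrc :: "nat \<Rightarrow> nat" where "xrc j = (if j = 0 then 2 else 4*3^(j-1))"

lemma idx_upd': "\<forall>p. \<forall>a\<in>set (B p). fst a < k \<Longrightarrow> \<forall>p. \<forall>a\<in>set ((B(x := [(k,c)])) p). fst a < Suc k"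
  by (auto simp: less_SucI)

lemma xr_runs:
  assumes BI: "B I = []" and idx: "\<forall>p. \<forall>a\<in>set (B p). fst a < k"
    and cS: "tc S (B S) \<noteq> Some Blue" and cD: "tc D (B D) \<noteq> Some Red"
  shows "runs (B(S := tower k n Red @ B S)) (xr n) (B(I := tower k n Red)) (\<lambda>i. if k \<le> i \<and> i < k+n then xrc (i-k) else 0)"
proof (cases n)
  case 0
  then show ?thesis using BI by (auto intro!: runs_cong[OF runs_eq[OF runs_Nil]] simp: fun_post_eq)
next
  case (Suc m)
  define B1 where "B1 = B(S := (k,Red)#B S)"
  have r1: "runs (B(S := tower k (Suc m) Red @ B S)) (lin m S S I) (B1(I := tower (Suc k) m Blue))
      (\<lambda>i. if Suc k \<le> i \<and> i < Suc k + m then 3^(i - Suc k) else 0)"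
  proof -
    have "runs (B1(S := tower (Suc k) m (cl S Red S) @ B1 S)) (lin m S S I) (B1(I := tower (Suc k) m (cl S Red I) @ B1 I))
      (\<lambda>i. if Suc k \<le> i \<and> i < Suc k + m then lc S S I (i - Suc k) else 0)"
      apply (rule lin_runs)
        apply simp
      unfolding B1_def
       apply (rule idx_upd[OF idx])
      using cS cD BI by (simp add: all_post cl_def)
    then show ?thesis by (rule runs_eq') (simp_all add: B1_def cl_def lc_def tower_Suc BI fun_post_eq)
  qed
  have r2: "runs (B1(I := tower (Suc k) m Blue)) [(S,D)] (B(D := (k,Blue)#B D, I := tower (Suc k) m Blue)) (\<lambda>i. if i = k then 1 else 0)"
    apply (rule move_step'[where j=k and cc=Red and xs="B S"])
    using idx cD by (simp_all add: B1_def fun_post_eq)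
  define B2 where "B2 = B(D := (k,Blue)#B D)"
  have r3: "runs (B(D := (k,Blue)#B D, I := tower (Suc k) m Blue)) (lin m S I S) (B2(S := tower (Suc k) m Red @ B S))
      (\<lambda>i. if Suc k \<le> i \<and> i < Suc k + m then 3^(i - Suc k) else 0)"
  proof -
    have "runs (B2(I := tower (Suc k) m (cl S Red I) @ B2 I)) (lin m S I S) (B2(S := tower (Suc k) m (cl S Red S) @ B2 S))
      (\<lambda>i. if Suc k \<le> i \<and> i < Suc k + m then lc S I S (i - Suc k) else 0)"
      apply (rule lin_runs)
        apply simp
      unfolding B2_def
       apply (rule idx_upd[OF idx])
      using cS cD BI by (simp add: all_post cl_def)
    then show ?thesis by (rule runs_eq') (simp_all add: B2_def cl_def lc_def BI fun_post_eq)
  qed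
  have r4: "runs (B2(S := tower (Suc k) m Red @ B S)) [(D,I)] (B(I := [(k,Red)], S := tower (Suc k) m Red @ B S)) (\<lambda>i. if i = k then 1 else 0)"
    apply (rule move_step'[where j=k and cc=Blue and xs="B D"])
    using idx BI by (simp_all add: B2_def fun_post_eq)
  define B3 where "B3 = B(I := [(k,Red)])"
  have r5: "runs (B(I := [(k,Red)], S := tower (Suc k) m Red @ B S)) (lin m D S I) (B(I := tower k n Red))
      (\<lambda>i. if Suc k \<le> i \<and> i < Suc k + m then 2*3^(i - Suc k) else 0)"
  proof -
    have "runs (B3(S := tower (Suc k) m (cl D Blue S) @ B3 S)) (lin m D S I) (B3(I := tower (Suc k) m (cl D Blue I) @ B3 I))
      (\<lambda>i. if Suc k \<le> i \<and> i < Suc k + m then lc D S I (i - Suc k) else 0)"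
      apply (rule lin_runs)
        apply simp
      unfolding B3_def
       apply (rule idx_upd'[OF idx])
      using cS cD BI by (simp add: all_post cl_def)
    then show ?thesis by (rule runs_eq') (simp_all add: B3_def cl_def lc_def BI fun_post_eq Suc tower_Suc)
  qed
  have "runs (B(S := tower k (Suc m) Red @ B S)) (lin m S S I @ [(S,D)] @ lin m S I S @ [(D,I)] @ lin m D S I) (B(I := tower k n Red))
     (\<lambda>i. (if Suc k \<le> i \<and> i < Suc k + m then 3^(i - Suc k) else 0) + ((if i = k then 1 else 0) +
       ((if Suc k \<le> i \<and> i < Suc k + m then 3^(i - Suc k) else 0) + ((if i = k then 1 else 0) +
        (if Suc k \<le> i \<and> i < Suc k + m then 2*3^(i - Suc k) else 0)))))"
    by (rule runs_seq[OF r1 runs_seq[OF r2 runs_seq[OF r3 runs_seq[OF r4 r5]]]]) (simp_all add: B2_def)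
  then show ?thesis
  proof (rule runs_eqm)
    fix i
    show "(if Suc k \<le> i \<and> i < Suc k + m then 3^(i - Suc k) else 0) + ((if i = k then 1 else 0) +
       ((if Suc k \<le> i \<and> i < Suc k + m then 3^(i - Suc k) else 0) + ((if i = k then 1 else 0) +
        (if Suc k \<le> i \<and> i < Suc k + m then 2*3^(i - Suc k) else 0)))) =
        (if k \<le> i \<and> i < k + n then xrc (i - k) else 0)"
    proof (cases "i \<le> k")
      case True then show ?thesis by (auto simp: xrc_def Suc)
    next
      case False
      then obtain j where j: "i = Suc k + j" by (metis add_Suc_right add_Suc_shift less_imp_Suc_add not_le)
      show ?thesis unfolding j by (auto simp: xrc_def Suc)
    qed
  qed (simp_all add: Suc)
qed




fun sf :: "nat \<Rightarrow> (post \<times> post) list" and yr :: "nat \<Rightarrow> (post \<times> post) list" where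
  "sf 0 = []" | "sf (Suc n) = xr n @ [(S,D)] @ yr n"
| "yr 0 = []" | "yr (Suc m) = lin m D I S @ [(I,D)] @ sf m"

fun Q :: "nat \<Rightarrow> nat" where
  "Q 0 = 1" | "Q (Suc 0) = 3" | "Q (Suc (Suc j)) = 2*3^(Suc j) + Q j"

definition yrc :: "nat \<Rightarrow> nat" where "yrc j = (if j = 0 then 1 else 2*3^(j-1) + Q (j-1))"

lemma Q_Suc: "Q (Suc j) = xrc j + yrc j"
  by (cases j) (auto simp: xrc_def yrc_def)

lemma sf_yr: "(\<forall>B k. B I = [] \<longrightarrow> (\<forall>p. \<forall>a\<in>set (B p). fst a < k) \<longrightarrow> tc S (B S) \<noteq> Some Blue \<longrightarrow> tc D (B D) \<noteq> Some Red \<longrightarrow>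
   runs (B(S := tower k n Red @ B S)) (sf n) (B(D := tower k n Blue @ B D)) (\<lambda>i. if k \<le> i \<and> i < k+n then Q (i-k) else 0)) \<and>
  (\<forall>B k. B I = [] \<longrightarrow> (\<forall>p. \<forall>a\<in>set (B p). fst a < k) \<longrightarrow> tc S (B S) \<noteq> Some Blue \<longrightarrow> tc D (B D) \<noteq> Some Red \<longrightarrow>
   runs (B(I := tower k n Red)) (yr n) (B(D := tower k n Blue @ B D)) (\<lambda>i. if k \<le> i \<and> i < k+n then yrc (i-k) else 0))"
proof (induction n)
  case 0
  show ?case by (auto intro!: runs_eq'[OF runs_Nil] simp: fun_post_eq)
next
  case (Suc n)
  have IHsf: "\<And>B k. B I = [] \<Longrightarrow> (\<forall>p. \<forall>a\<in>set (B p). fst a < k) \<Longrightarrow> tc S (B S) \<noteq> Some Blue \<Longrightarrow> tc D (B D) \<noteq> Some Red \<Longrightarrow>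
   runs (B(S := tower k n Red @ B S)) (sf n) (B(D := tower k n Blue @ B D)) (\<lambda>i. if k \<le> i \<and> i < k+n then Q (i-k) else 0)"
    using Suc.IH by blast
  have IHyr: "\<And>B k. B I = [] \<Longrightarrow> (\<forall>p. \<forall>a\<in>set (B p). fst a < k) \<Longrightarrow> tc S (B S) \<noteq> Some Blue \<Longrightarrow> tc D (B D) \<noteq> Some Red \<Longrightarrow>
   runs (B(I := tower k n Red)) (yr n) (B(D := tower k n Blue @ B D)) (\<lambda>i. if k \<le> i \<and> i < k+n then yrc (i-k) else 0)"
    using Suc.IH by blast
  have YR: "runs (B(I := tower k (Suc n) Red)) (yr (Suc n)) (B(D := tower k (Suc n) Blue @ B D)) (\<lambda>i. if k \<le> i \<and> i < k + Suc n then yrc (i-k) else 0)"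
    if BI: "B I = []" and idx: "\<forall>p. \<forall>a\<in>set (B p). fst a < k" and cS: "tc S (B S) \<noteq> Some Blue" and cD: "tc D (B D) \<noteq> Some Red" for B k
  proof -
    define B1 where "B1 = B(I := [(k,Red)])"
    have r1: "runs (B(I := tower k (Suc n) Red)) (lin n D I S) (B1(S := tower (Suc k) n Red @ B S))
      (\<lambda>i. if Suc k \<le> i \<and> i < Suc k + n then 2*3^(i - Suc k) else 0)"
    proof -
      have "runs (B1(I := tower (Suc k) n (cl D Blue I) @ B1 I)) (lin n D I S) (B1(S := tower (Suc k) n (cl D Blue S) @ B1 S))
        (\<lambda>i. if Suc k \<le> i \<and> i < Suc k + n then lc D I S (i - Suc k) else 0)"
        apply (rule lin_runs)
          apply simp
        unfolding B1_def
         apply (rule idx_upd'[OF idx])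
        using cS cD BI by (simp add: all_post cl_def)
      then show ?thesis by (rule runs_eq') (simp_all add: B1_def cl_def lc_def BI fun_post_eq tower_Suc)
    qed
    define B2 where "B2 = B(D := (k,Blue)#B D)"
    have r2: "runs (B1(S := tower (Suc k) n Red @ B S)) [(I,D)] (B2(S := tower (Suc k) n Red @ B2 S)) (\<lambda>i. if i = k then 1 else 0)"
      apply (rule move_step'[where j=k and cc=Red and xs="[]"])
      using idx cD BI by (simp_all add: B1_def B2_def fun_post_eq)
    have r3: "runs (B2(S := tower (Suc k) n Red @ B2 S)) (sf n) (B(D := tower k (Suc n) Blue @ B D))
       (\<lambda>i. if Suc k \<le> i \<and> i < Suc k+n then Q (i-Suc k) else 0)"
    proof -
      have "runs (B2(S := tower (Suc k) n Red @ B2 S)) (sf n) (B2(D := tower (Suc k) n Blue @ B2 D))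
       (\<lambda>i. if Suc k \<le> i \<and> i < Suc k+n then Q (i-Suc k) else 0)"
        apply (rule IHsf)
        using BI cS unfolding B2_def by (simp_all add: idx_upd[OF idx])
      then show ?thesis by (rule runs_eq') (simp_all add: B2_def tower_Suc)
    qed
    have "runs (B(I := tower k (Suc n) Red)) (lin n D I S @ [(I,D)] @ sf n) (B(D := tower k (Suc n) Blue @ B D))
      (\<lambda>i. (if Suc k \<le> i \<and> i < Suc k + n then 2*3^(i - Suc k) else 0) + ((if i = k then 1 else 0) +
         (if Suc k \<le> i \<and> i < Suc k+n then Q (i-Suc k) else 0)))"
      by (rule runs_seq[OF r1 runs_seq[OF r2 r3]]) simp_all
    then show ?thesis
    proof (rule runs_eqm)
      fix i
      show "(if Suc k \<le> i \<and> i < Suc k + n then 2*3^(i - Suc k) else 0) + ((if i = k then 1 else 0) +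
         (if Suc k \<le> i \<and> i < Suc k+n then Q (i-Suc k) else 0)) = (if k \<le> i \<and> i < k + Suc n then yrc (i-k) else 0)"
      proof (cases "i \<le> k")
        case True then show ?thesis by (auto simp: yrc_def)
      next
        case False
        then obtain j where j: "i = Suc k + j" by (metis add_Suc_right add_Suc_shift less_imp_Suc_add not_le)
        show ?thesis unfolding j by (auto simp: yrc_def)
      qed
    qed simp_all
  qed
  have SF: "runs (B(S := tower k (Suc n) Red @ B S)) (sf (Suc n)) (B(D := tower k (Suc n) Blue @ B D)) (\<lambda>i. if k \<le> i \<and> i < k + Suc n then Q (i-k) else 0)"
    if BI: "B I = []" and idx: "\<forall>p. \<forall>a\<in>set (B p). fst a < k" and cS: "tc S (B S) \<noteq> Some Blue" and cD: "tc D (B D) \<noteq> Some Red" for B k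
  proof -
    define B1 where "B1 = B(S := (k,Red)#B S)"
    have r1: "runs (B(S := tower k (Suc n) Red @ B S)) (xr n) (B1(I := tower (Suc k) n Red))
      (\<lambda>i. if Suc k \<le> i \<and> i < Suc k + n then xrc (i - Suc k) else 0)"
    proof -
      have "runs (B1(S := tower (Suc k) n Red @ B1 S)) (xr n) (B1(I := tower (Suc k) n Red))
        (\<lambda>i. if Suc k \<le> i \<and> i < Suc k + n then xrc (i - Suc k) else 0)"
        apply (rule xr_runs)
        using BI cD unfolding B1_def by (simp_all add: idx_upd[OF idx])
      then show ?thesis by (rule runs_eq') (simp_all add: B1_def tower_Suc)
    qed
    define B2 where "B2 = B(D := (k,Blue)#B D)"
    have r2: "runs (B1(I := tower (Suc k) n Red)) [(S,D)] (B2(I := tower (Suc k) n Red)) (\<lambda>i. if i = k then 1 else 0)"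
      apply (rule move_step'[where j=k and cc=Red and xs="B S"])
      using idx cD BI by (simp_all add: B1_def B2_def fun_post_eq)
    have r3: "runs (B2(I := tower (Suc k) n Red)) (yr n) (B(D := tower k (Suc n) Blue @ B D))
       (\<lambda>i. if Suc k \<le> i \<and> i < Suc k+n then yrc (i-Suc k) else 0)"
    proof -
      have "runs (B2(I := tower (Suc k) n Red)) (yr n) (B2(D := tower (Suc k) n Blue @ B2 D))
       (\<lambda>i. if Suc k \<le> i \<and> i < Suc k+n then yrc (i-Suc k) else 0)"
        apply (rule IHyr)
        using BI cS unfolding B2_def by (simp_all add: idx_upd[OF idx])
      then show ?thesis by (rule runs_eq') (simp_all add: B2_def tower_Suc)
    qed
    have "runs (B(S := tower k (Suc n) Red @ B S)) (xr n @ [(S,D)] @ yr n) (B(D := tower k (Suc n) Blue @ B D))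
      (\<lambda>i. (if Suc k \<le> i \<and> i < Suc k + n then xrc (i - Suc k) else 0) + ((if i = k then 1 else 0) +
         (if Suc k \<le> i \<and> i < Suc k+n then yrc (i-Suc k) else 0)))"
      by (rule runs_seq[OF r1 runs_seq[OF r2 r3]]) simp_all
    then show ?thesis
    proof (rule runs_eqm)
      fix i
      show "(if Suc k \<le> i \<and> i < Suc k + n then xrc (i - Suc k) else 0) + ((if i = k then 1 else 0) +
         (if Suc k \<le> i \<and> i < Suc k+n then yrc (i-Suc k) else 0)) = (if k \<le> i \<and> i < k + Suc n then Q (i-k) else 0)"
      proof (cases "i \<le> k")
        case True then show ?thesis by auto
      next
        case False
        then obtain j where j: "i = Suc k + j" by (metis add_Suc_right add_Suc_shift less_imp_Suc_add not_le)
        show ?thesis unfolding j by (auto simp: Q_Suc)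
      qed
    qed simp_all
  qed
  show ?case using SF YR by blast
qed



lemma Q_real: "real (Q j) = (3^(j+1) + 2 + (-1)^(j+1))/4"
  by (induction j rule: Q.induct) (simp_all add: field_simps)
lemma P_SF_eq: assumes "k \<ge> 1" shows "P_SF k = real (Q (k-1))"
proof (cases "k = 1")
  case True then show ?thesis by (simp add: P_SF_def power_int_minus)
next
  case False
  have "\<exists>j. k = Suc (Suc j)" using False assms by presburger
  then obtain j where k: "k = Suc (Suc j)" by blast
  have h1: "int k - 2 = int j" and h2: "int k - 1 = int (Suc j)" using k by simp_all
  have e1: "(3::real) powi (int k - 2) = 3^j" unfolding h1 power_int_of_nat by simp
  have e2: "(3::real) powi (int k - 1) = 3 * 3^j" unfolding h2 power_int_of_nat by simp
  have q: "real (Q (k-1)) = (9 * 3^j + 2 + (if even j then 1 else -1))/4"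
    unfolding Q_real using k by simp
  have o: "odd k = odd j" using k by simp
  show ?thesis unfolding P_SF_def e1 e2 q o
    by (cases "even j") (simp_all add: field_simps)
qed

lemma sum_Q: "real (\<Sum>i\<in>{1..N}. Q (i-1)) = (3^(N+1) - 3)/8 + real N/2 + ((-1)^N - 1)/8"
proof (induction N)
  case 0 then show ?case by simp
next
  case (Suc N)
  have "(\<Sum>i\<in>{1..Suc N}. Q (i-1)) = (\<Sum>i\<in>{1..N}. Q (i-1)) + Q N" by simp
  then have "real (\<Sum>i\<in>{1..Suc N}. Q (i-1)) = real (\<Sum>i\<in>{1..N}. Q (i-1)) + real (Q N)" by simp
  also have "\<dots> = (3^(N+1) - 3)/8 + real N/2 + ((-1)^N - 1)/8 + (3^(N+1) + 2 + (-1)^(N+1))/4"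
    unfolding Suc.IH Q_real by simp
  also have "\<dots> = (3^(Suc N+1) - 3)/8 + real (Suc N)/2 + ((-1)^(Suc N) - 1)/8"
  proof -
    obtain X s where X: "X = (3::real)^N" and s: "s = (-1::real)^N" by blast
    have "(3::real)^(N+1) = 3*X" "(3::real)^(Suc N+1) = 9*X" "(-1::real)^(N+1) = -s" "(-1::real)^(Suc N) = -s"
      using X s by simp_all
    then show ?thesis unfolding s[symmetric] by (simp add: field_simps)
  qed
  finally show ?case .
qed
lemma S_SF_eq: assumes "N \<ge> 1" shows "S_SF N = (3^(N+1)-3)/8 + real N/2 + ((-1)^N - 1)/8"
proof -
  obtain j where N: "N = Suc j" using assms by (cases N) auto
  obtain X where X: "X = (3::real)^j" by blast
  have p: "(3::real)^(N+1) = 9*X" "(3::real)^(N-1) = X" using N X by simp_all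
  show ?thesis
  proof (cases "even j")
    case True
    then have "(-1::real)^N = -1" "odd N" using N by simp_all
    then show ?thesis unfolding S_SF_def p by (simp add: field_simps)
  next
    case False
    then have "(-1::real)^N = 1" "\<not> odd N" using N by simp_all
    then show ?thesis unfolding S_SF_def p by (simp add: field_simps)
  qed
qed


lemma a: "(\<lambda>N. real N / 3^N) \<longlonglongrightarrow> 0" using lim_n_over_pown[of "3::real"] by simp
lemma b0: "(\<lambda>N::nat. 1 / (3::real)^N) \<longlonglongrightarrow> 0" by (rule LIMSEQ_divide_realpow_zero) simp
lemma t1: "\<bar>((-1::real)^N - 1) / 8\<bar> \<le> 1" by (cases "even N") auto
lemma t2: "norm (((-1)^N - 1) / 8 / ((3::real)^N)) \<le> norm (1 / (3::real)^N) * 1"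
proof -
  have pos: "(3::real)^N > 0" by simp
  have "norm (((-1)^N - 1) / 8 / ((3::real)^N)) = \<bar>((-1::real)^N - 1) / 8\<bar> / 3^N"
    by (simp add: abs_divide)
  also have "\<dots> \<le> 1 / 3^N" by (rule divide_right_mono[OF t1]) simp
  finally show ?thesis by simp
qed
lemma b: "(\<lambda>N::nat. ((-1)^N - 1) / 8 / (3::real)^N) \<longlonglongrightarrow> 0"
  by (rule tendsto_0_le[OF b0, where K=1], rule always_eventually, rule allI, rule t2)
lemma c: "(\<lambda>N. 3/8 - 3/8 * (1 / 3^N) + 1/2 * (real N / 3^N) + ((-1)^N - 1) / 8 / 3^N) \<longlonglongrightarrow> 3/8 - 3/8 * 0 + 1/2 * 0 + (0::real)"
  by (rule tendsto_add[OF tendsto_add[OF tendsto_diff[OF tendsto_const tendsto_mult[OF tendsto_const b0]] tendsto_mult[OF tendsto_const a]] b])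
lemma d: "(\<lambda>N::nat. 1/2 - 1/2 * (1 / (3::real)^N)) \<longlonglongrightarrow> 1/2 - 1/2 * 0"
  by (rule tendsto_diff[OF tendsto_const tendsto_mult[OF tendsto_const b0]])
lemma alg: "(X::real) > 1 \<Longrightarrow> (3/8 - 3/8*(1/X) + 1/2*(n/X) + (s-1)/8/X)/(1/2 - 1/2*(1/X)) = ((3*X-3)/8 + n/2 + (s-1)/8)/((X-1)/2)"
  by (simp add: field_simps)
lemma lim: "(\<lambda>N. S_SF N / ((3 ^ N - 1) / 2)) \<longlonglongrightarrow> 3 / 4"
proof -
  have e: "(\<lambda>N. (3/8 - 3/8 * (1 / 3^N) + 1/2 * (real N / 3^N) + ((-1)^N - 1) / 8 / 3^N) / (1/2 - 1/2 * (1 / (3::real)^N)))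
     \<longlonglongrightarrow> (3/8 - 3/8 * 0 + 1/2 * 0 + 0) / (1/2 - 1/2 * 0)"
    by (rule tendsto_divide[OF c d]) simp
  have e': "(3/8 - 3/8 * 0 + 1/2 * 0 + 0) / (1/2 - 1/2 * 0) = (3/4::real)" by simp
  show ?thesis
  proof (rule Lim_transform_eventually[OF e[unfolded e']])
    show "\<forall>\<^sub>F N in sequentially. (3/8 - 3/8 * (1 / 3^N) + 1/2 * (real N / 3^N) + ((-1)^N - 1) / 8 / 3^N) / (1/2 - 1/2 * (1 / (3::real)^N)) = S_SF N / ((3 ^ N - 1) / 2)"
    proof (rule eventually_sequentiallyI[of 1])
      fix N :: nat assume N: "N \<ge> 1"
      then have pos: "(3::real)^N > 1" by (simp add: one_less_power)
      have p: "(3::real)^(N+1) = 3 * 3^N" by simp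
      show "(3/8 - 3/8 * (1 / 3^N) + 1/2 * (real N / 3^N) + ((-1)^N - 1) / 8 / 3^N) / (1/2 - 1/2 * (1 / (3::real)^N)) = S_SF N / ((3 ^ N - 1) / 2)"
        unfolding S_SF_eq[OF N] p by (rule alg[OF pos])
    qed
  qed
qed



lemma length_sum:
  "valid_run st ms st' \<Longrightarrow> (\<forall>p. \<forall>a\<in>set (st p). fst a \<in> A) \<Longrightarrow> finite A \<Longrightarrow> length ms = (\<Sum>i\<in>A. disk_moves st ms i)"
proof (induction ms arbitrary: st)
  case Nil then show ?case by simp
next
  case (Cons m ms)
  obtain p q where m: "m = (p,q)" by (cases m)
  have lm: "legal_move st (p,q)" and vr: "valid_run (do_move st m) ms st'" using Cons.prems(1) m by simp_all
  have ne: "st p \<noteq> []" using lm by (simp add: legal_move_def)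
  define j where "j = fst (hd (st p))"
  have jA: "j \<in> A" using Cons.prems(2) ne unfolding j_def by (meson list.set_sel(1))
  have pres: "\<forall>p'. \<forall>a\<in>set (do_move st m p'). fst a \<in> A"
  proof (intro allI ballI)
    fix p' a assume a: "a \<in> set (do_move st m p')"
    have "a \<in> set (tl (st p)) \<or> a = (case hd (st p) of (k, c) \<Rightarrow> (k, flip c)) \<or> a \<in> set (st p')"
      using a by (auto simp: do_move_def m split: if_splits)
    then show "fst a \<in> A"
    proof (elim disjE)
      assume "a \<in> set (tl (st p))" then have "a \<in> set (st p)" by (meson list.set_sel(2) ne)
      then show ?thesis using Cons.prems(2) by blast
    next
      assume "a = (case hd (st p) of (k, c) \<Rightarrow> (k, flip c))"
      then have "fst a = j" unfolding j_def by (simp split: prod.splits)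
      then show ?thesis using jA by simp
    next
      assume "a \<in> set (st p')" then show ?thesis using Cons.prems(2) by blast
    qed
  qed
  have "(\<Sum>i\<in>A. disk_moves st (m # ms) i) = (\<Sum>i\<in>A. (if j = i then 1 else 0) + disk_moves (do_move st m) ms i)"
    by (simp add: m j_def)
  also have "\<dots> = 1 + (\<Sum>i\<in>A. disk_moves (do_move st m) ms i)"
    using jA Cons.prems(3) by (simp add: sum.distrib)
  also have "\<dots> = 1 + length ms" using Cons.IH[OF vr pres Cons.prems(3)] by simp
  finally show ?case by simp
qed


theorem mainTheorem3:
  shows "(\<forall>N::nat. N \<ge> 1 \<longrightarrow>
            (\<exists>ms. valid_run (init_state N) ms (final_state N)
                 \<and> real (length ms) = S_SF N
                 \<and> (\<forall>k \<in> {1..N}. real (disk_moves (init_state N) ms k) = P_SF k)))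
         \<and> (\<lambda>N. S_SF N / ((3 ^ N - 1) / 2)) \<longlonglongrightarrow> 3 / 4"
proof (intro conjI allI impI)
  fix N :: nat assume N: "1 \<le> N"
  define B0 where "B0 = (\<lambda>_::post. [] :: (nat \<times> color) list)"
  have R0: "runs (B0(S := tower 1 N Red @ B0 S)) (sf N) (B0(D := tower 1 N Blue @ B0 D)) (\<lambda>i. if 1 \<le> i \<and> i < 1+N then Q (i-1) else 0)"
    by (rule conjunct1[OF sf_yr[of N], rule_format]) (simp_all add: B0_def)
  have init: "init_state N = B0(S := tower 1 N Red @ B0 S)"
    by (simp add: init_state_def tower_def fun_post_eq B0_def)
  have fin: "final_state N = B0(D := tower 1 N Blue @ B0 D)"
    by (simp add: final_state_def tower_def fun_post_eq B0_def)
  have R: "runs (init_state N) (sf N) (final_state N) (\<lambda>i. if 1 \<le> i \<and> i < 1+N then Q (i-1) else 0)"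
    using R0 init fin by simp
  have vr: "valid_run (init_state N) (sf N) (final_state N)" and dm: "\<And>i. disk_moves (init_state N) (sf N) i = (if 1 \<le> i \<and> i < 1+N then Q (i-1) else 0)"
    using R by (simp_all add: runs_def)
  have idx: "\<forall>p. \<forall>a\<in>set (init_state N p). fst a \<in> {1..N}" by (auto simp: init_state_def)
  have "length (sf N) = (\<Sum>i\<in>{1..N}. disk_moves (init_state N) (sf N) i)"
    by (rule length_sum[OF vr idx]) simp
  also have "\<dots> = (\<Sum>i\<in>{1..N}. Q (i-1))" by (rule sum.cong) (auto simp: dm)
  finally have len: "real (length (sf N)) = S_SF N" using sum_Q[of N] S_SF_eq[OF N] by simp
  have "\<forall>k \<in> {1..N}. real (disk_moves (init_state N) (sf N) k) = P_SF k"
    using P_SF_eq by (auto simp: dm)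
  then show "\<exists>ms. valid_run (init_state N) ms (final_state N) \<and> real (length ms) = S_SF N
                 \<and> (\<forall>k \<in> {1..N}. real (disk_moves (init_state N) ms k) = P_SF k)"
    using vr len by blast
next
  show "(\<lambda>N. S_SF N / ((3 ^ N - 1) / 2)) \<longlonglongrightarrow> 3 / 4" by (rule lim)
qed

end
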